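(* Let $(\mathbf x,\mathbf p,\mu)$ be a deterministic TFM satisfying weak UIC and $2$-weak-SCP. Let $\mathbf b=(b_1,\dots,b_m)$ be a bid vector and $i$ a user with $x_i(\mathbf b)=1$, and let $\mathbf b'=(\mathbf b_{-i},b_i')$ be such that $x_i(\mathbf b')=1$. Then (1) $\mu(\mathbf b)=\mu(\mathbf b')$; and (2) for every user $j$ with $x_j(\mathbf b)=1$ and $b_j>p_j(\mathbf b)$, we have $x_j(\mathbf b')=1$ and $p_j(\mathbf b')=p_j(\mathbf b)$.
   Context: Setting (TFM). Each user $i$ has a true value $v_i\ge0$ and submits a single bid $b_i\ge0$; $\mathbf b=(b_1,\dots,b_m)$, $\mathbf b_{-i}$ the other bids. A TFM has an inclusion rule (run by the miner, choosing at most $B$ bids, $B$ finite or infinite) and confirmation, payment, miner-revenue rules (run by the blockchain on included bids); the mechanism treats users symmetrically. Composing the honest inclusion rule with the others gives deterministic $(\mathbf x,\mathbf p,\mu)$: $x_i(\mathbf b)\in\{0,1\}$ indicates confirmation, $p_i(\mathbf b)\le b_i$ the payment ($0$ if unconfirmed), $\mu(\mathbf b)$ the miner revenue (at most total payment). Strategic players (a user, the miner, or the miner with some users) may bid untruthfully after seeing all bids, inject fake bids (true value $0$), and (if the miner is involved) include any at most $B$ available bids. Weak ($1$-strict) utility: miner revenue (if the miner is in the player) plus $v-p$ for each confirmed transaction of the player (true value $v$, payment $p$), minus $(b-v)$ for each unconfirmed transaction of the player with bid $b>v$. Weak UIC: with an honest miner, each user's weak utility is maximized by truthful bidding without fake bids,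 whatever the other bids. $c$-weak-SCP: for every coalition of the miner with between $1$ and $c$ users, joint weak utility is maximized by truthful bidding and honest miner behavior, whatever the other bids. *)

theory Defs
  imports Main "HOL-Library.Extended_Nat"
begin

text \<open>The honest inclusion rule picks a set of indices of the posted bid list
  (at most the block size, which may be infinite).  The blockchain rules
  (confirmation, payment, miner revenue) act on the list of included bids
  (kept in posting order); a transaction is referred to by its position in
  that list.\<close>
record tfm =
  incl :: "real list \<Rightarrow> nat set"
  cap  :: enat
  tconf :: "real list \<Rightarrow> nat \<Rightarrow> bool"
  tpay  :: "real list \<Rightarrow> nat \<Rightarrow> real"
  trev  :: "real list \<Rightarrow> real"

definition nonneg :: "real list \<Rightarrow> bool" where
  "nonneg bs \<longleftrightarrow> (\<forall>x\<in>set bs. 0 \<le> x)"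

definition pos :: "nat set \<Rightarrow> nat \<Rightarrow> nat" where
  "pos S k = card {j\<in>S. j < k}"

definition confirmed :: "tfm \<Rightarrow> real list \<Rightarrow> nat set \<Rightarrow> nat \<Rightarrow> bool" where
  "confirmed M bs S k \<longleftrightarrow> k \<in> S \<and> tconf M (nths bs S) (pos S k)"

definition payment :: "tfm \<Rightarrow> real list \<Rightarrow> nat set \<Rightarrow> nat \<Rightarrow> real" where
  "payment M bs S k = (if confirmed M bs S k then tpay M (nths bs S) (pos S k) else 0)"

definition revenue :: "tfm \<Rightarrow> real list \<Rightarrow> nat set \<Rightarrow> real" where
  "revenue M bs S = trev M (nths bs S)"

definition x :: "tfm \<Rightarrow> real list \<Rightarrow> nat \<Rightarrow> bool" where
  "x M b i = confirmed M b (incl M b) i"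

definition p :: "tfm \<Rightarrow> real list \<Rightarrow> nat \<Rightarrow> real" where
  "p M b i = payment M b (incl M b) i"

definition mu :: "tfm \<Rightarrow> real list \<Rightarrow> real" where
  "mu M b = revenue M b (incl M b)"

definition tfm_ok :: "tfm \<Rightarrow> bool" where
  "tfm_ok M \<longleftrightarrow> (\<forall>b. nonneg b \<longrightarrow>
      incl M b \<subseteq> {..<length b} \<and> enat (card (incl M b)) \<le> cap M \<and>
      (\<forall>i<length b. p M b i \<le> b ! i) \<and>
      mu M b \<le> (\<Sum>i<length b. p M b i))"

definition tx_util :: "tfm \<Rightarrow> real list \<Rightarrow> nat set \<Rightarrow> nat \<Rightarrow> real \<Rightarrow> real" where
  "tx_util M bs S k v =
     (if confirmed M bs S k then v - payment M bs S k else - max 0 (bs ! k - v))"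

text \<open>Joint weak utility of a strategic player: (optionally) the miner, the
  real users in C (true values v), and all fake bids, which are the posted
  bids at positions m, m+1, ... (m = number of real users), with true value 0.\<close>
definition coal_util ::
  "tfm \<Rightarrow> bool \<Rightarrow> nat set \<Rightarrow> (nat \<Rightarrow> real) \<Rightarrow> nat \<Rightarrow> real list \<Rightarrow> nat set \<Rightarrow> real" where
  "coal_util M miner C v m bs S =
     (if miner then revenue M bs S else 0)
     + (\<Sum>k\<in>C. tx_util M bs S k (v k))
     + (\<Sum>k\<in>{m..<length bs}. tx_util M bs S k 0)"

definition dev :: "real list \<Rightarrow> nat set \<Rightarrow> (nat \<Rightarrow> real) \<Rightarrow> real list \<Rightarrow> real list" where
  "dev b C r F = map (\<lambda>k. if k \<in> C then r k else b ! k) [0..<length b] @ F"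

definition weak_UIC :: "tfm \<Rightarrow> bool" where
  "weak_UIC M \<longleftrightarrow> (\<forall>b i v r F.
     nonneg b \<and> i < length b \<and> 0 \<le> v \<and> 0 \<le> r \<and> nonneg F \<longrightarrow>
     coal_util M False {i} (\<lambda>_. v) (length b) (dev b {i} (\<lambda>_. r) F)
        (incl M (dev b {i} (\<lambda>_. r) F))
     \<le> coal_util M False {i} (\<lambda>_. v) (length b) (dev b {i} (\<lambda>_. v) [])
        (incl M (dev b {i} (\<lambda>_. v) [])))"

definition weak_SCP :: "tfm \<Rightarrow> nat \<Rightarrow> bool" where
  "weak_SCP M c \<longleftrightarrow> (\<forall>b C v r F S.
     nonneg b \<and> C \<subseteq> {..<length b} \<and> 1 \<le> card C \<and> card C \<le> c \<and>
     (\<forall>k\<in>C. 0 \<le> v k \<and> 0 \<le> r k) \<and> nonneg F \<and>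
     S \<subseteq> {..<length (dev b C r F)} \<and> enat (card S) \<le> cap M \<longrightarrow>
     coal_util M True C v (length b) (dev b C r F) S
     \<le> coal_util M True C v (length b) (dev b C v []) (incl M (dev b C v [])))"

end

theory Submission
  imports Defs
begin

lemma SCP_use:
  assumes "weak_SCP M c" "nonneg b" "C \<subseteq> {..<length b}" "1 \<le> card C" "card C \<le> c"
    "\<forall>k\<in>C. 0 \<le> v k \<and> 0 \<le> r k" "nonneg F"
    "S \<subseteq> {..<length (dev b C r F)}" "enat (card S) \<le> cap M"
  shows "coal_util M True C v (length b) (dev b C r F) S
     \<le> coal_util M True C v (length b) (dev b C v []) (incl M (dev b C v []))"
  using assms unfolding weak_SCP_def by blast

lemma UIC_use:
  assumes "weak_UIC M" "nonneg b" "i < length b" "0 \<le> v" "0 \<le> r" "nonneg F"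
  shows "coal_util M False {i} (\<lambda>_. v) (length b) (dev b {i} (\<lambda>_. r) F)
        (incl M (dev b {i} (\<lambda>_. r) F))
     \<le> coal_util M False {i} (\<lambda>_. v) (length b) (dev b {i} (\<lambda>_. v) [])
        (incl M (dev b {i} (\<lambda>_. v) []))"
  using assms unfolding weak_UIC_def by blast

lemma dev_eq:
  assumes "length c = length b" "\<forall>k<length b. c ! k = (if k \<in> C then r k else b ! k)"
  shows "dev b C r [] = c"
  using assms by (intro nth_equalityI) (auto simp: dev_def)

lemma cu:
  "length bs = m \<Longrightarrow> coal_util M mi C v m bs S =
     (if mi then revenue M bs S else 0) + (\<Sum>k\<in>C. tx_util M bs S k (v k))"
  by (simp add: coal_util_def)

lemma txu: "tx_util M c (incl M c) k v = (if x M c k then v - p M c k else - max 0 (c!k - v))"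
  by (simp add: tx_util_def x_def p_def)

lemma nonneg_upd: "nonneg b \<Longrightarrow> 0 \<le> y \<Longrightarrow> nonneg (b[i := y])"
  unfolding nonneg_def using set_update_subset_insert by fastforce

theorem mainTheorem13:
  assumes "tfm_ok M" and "weak_UIC M" and "weak_SCP M 2"
    and "nonneg b" and "i < length b" and "x M b i"
    and "0 \<le> bi'" and "x M (b[i := bi']) i"
  shows "mu M b = mu M (b[i := bi']) \<and>
    (\<forall>j<length b. x M b j \<and> b ! j > p M b j \<longrightarrow>
        x M (b[i := bi']) j \<and> p M (b[i := bi']) j = p M b j)"
proof -
  define b' where "b' = b[i := bi']"
  have nb': "nonneg b'" using nonneg_upd[OF assms(4,7)] b'_def by simp
  have lb: "length b' = length b" by (simp add: b'_def)
  have bi0: "0 \<le> b ! i" using assms(4,5) by (simp add: nonneg_def)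
  have b'i: "b' ! i = bi'" using assms(5) by (simp add: b'_def)
  have b'k: "\<And>k. k \<noteq> i \<Longrightarrow> b' ! k = b ! k" by (simp add: b'_def)
  have okb: "incl M b \<subseteq> {..<length b}" "enat (card (incl M b)) \<le> cap M"
    using assms(1,4) unfolding tfm_ok_def by auto
  have okb': "incl M b' \<subseteq> {..<length b'}" "enat (card (incl M b')) \<le> cap M"
    using assms(1) nb' unfolding tfm_ok_def by auto
  have xb'i: "x M b' i" using assms(8) b'_def by simp
  have d1: "dev b {i} (\<lambda>_. bi') [] = b'" by (rule dev_eq) (auto simp: lb b'_def nth_list_update)
  have d2: "dev b {i} (\<lambda>_. b!i) [] = b" by (rule dev_eq) auto
  have d3: "dev b' {i} (\<lambda>_. b!i) [] = b" by (rule dev_eq) (auto simp: lb b'k)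
  have d4: "dev b' {i} (\<lambda>_. bi') [] = b'" by (rule dev_eq) (auto simp: b'i)
  have U1: "b!i - p M b' i \<le> b!i - p M b i"
    using UIC_use[OF assms(2,4,5) bi0 assms(7), of "[]"] d1 d2 lb
    by (simp add: cu txu xb'i assms(6) nonneg_def)
  have U2: "bi' - p M b i \<le> bi' - p M b' i"
    using UIC_use[OF assms(2) nb', of i bi' "b!i" "[]"] d3 d4 lb assms(5)
    by (simp add: cu txu xb'i assms(6) nonneg_def bi0 assms(7))
  have peq: "p M b' i = p M b i" using U1 U2 by linarith
  have e1: "dev b {i} (\<lambda>k. b'!k) [] = b'" by (rule dev_eq) (auto simp: lb b'k)
  have e2: "dev b {i} (\<lambda>k. b!k) [] = b" by (rule dev_eq) auto
  have e3: "dev b' {i} (\<lambda>k. b!k) [] = b" by (rule dev_eq) (auto simp: lb b'k)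
  have e4: "dev b' {i} (\<lambda>k. b'!k) [] = b'" by (rule dev_eq) auto
  have S1: "mu M b' + (b!i - p M b' i) \<le> mu M b + (b!i - p M b i)"
    using SCP_use[OF assms(3,4), of "{i}" "\<lambda>k. b!k" "\<lambda>k. b'!k" "[]" "incl M b'"]
      e1 e2 lb okb' assms(5) bi0 b'i assms(7)
    by (simp add: cu txu xb'i assms(6) nonneg_def mu_def)
  have S2: "mu M b + (b'!i - p M b i) \<le> mu M b' + (b'!i - p M b' i)"
    using SCP_use[OF assms(3) nb', of "{i}" "\<lambda>k. b'!k" "\<lambda>k. b!k" "[]" "incl M b"]
      e3 e4 lb okb assms(5) bi0 b'i assms(7)
    by (simp add: cu txu xb'i assms(6) nonneg_def mu_def)
  have mueq: "mu M b = mu M b'" using S1 S2 peq by linarith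
  have part2: "x M b' j \<and> p M b' j = p M b j"
    if j: "j < length b" "x M b j" "b ! j > p M b j" for j
  proof (cases "j = i")
    case True thus ?thesis using xb'i peq by simp
  next
    case False
    have bj0: "0 \<le> b ! j" using assms(4) j(1) by (simp add: nonneg_def)
    have C: "{i, j} \<subseteq> {..<length b}" "card {i,j} = 2" using j(1) assms(5) False by auto
    have f1: "dev b {i,j} (\<lambda>k. b'!k) [] = b'" by (rule dev_eq) (auto simp: lb b'k)
    have f2: "dev b {i,j} (\<lambda>k. b!k) [] = b" by (rule dev_eq) auto
    have f3: "dev b' {i,j} (\<lambda>k. b!k) [] = b" by (rule dev_eq) (auto simp: lb b'k)
    have f4: "dev b' {i,j} (\<lambda>k. b'!k) [] = b'" by (rule dev_eq) auto
    define u where "u = tx_util M b' (incl M b') j (b!j)"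
    have b'j: "b' ! j = b ! j" using b'k False by simp
    have T1: "mu M b' + (b!i - p M b' i) + u \<le> mu M b + (b!i - p M b i) + (b!j - p M b j)"
      using SCP_use[OF assms(3,4), of "{i,j}" "\<lambda>k. b!k" "\<lambda>k. b'!k" "[]" "incl M b'"]
        f1 f2 lb okb' C assms(5) bi0 b'i assms(7) bj0 b'j False
      by (simp add: cu txu xb'i assms(6) j(2) nonneg_def mu_def u_def)
    have T2': "mu M b + (b'!i - p M b i) + (b!j - p M b j) \<le> mu M b' + (b'!i - p M b' i) + tx_util M b' (incl M b') j (b'!j)"
      using SCP_use[OF assms(3) nb', of "{i,j}" "\<lambda>k. b'!k" "\<lambda>k. b!k" "[]" "incl M b"]
        f3 f4 lb okb C assms(5) bi0 b'i assms(7) bj0 False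
      apply (simp add: cu xb'i assms(6) j(2) nonneg_def mu_def txu[of M b'] txu[of M b] b'j del: txu)
      using b'j by (cases "x M b' j") auto
    have T2: "mu M b + (b'!i - p M b i) + (b!j - p M b j) \<le> mu M b' + (b'!i - p M b' i) + u"
      using T2' b'j by (simp add: u_def)
    have ueq: "u = b!j - p M b j" using T1 T2 peq mueq by linarith
    have u_def': "u = (if x M b' j then b!j - p M b' j else - max 0 (b'!j - b!j))"
      unfolding u_def by (rule txu)
    show ?thesis
    proof (cases "x M b' j")
      case True thus ?thesis using ueq u_def' by simp
    next
      case False thus ?thesis using ueq u_def' b'j j(3) by simp
    qed
  qed
  show ?thesis using mueq part2 b'_def by blast
qed

end
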